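(* Let $u\in\{0,1,2\}^*$, $w\in\{0,1\}^*$ and $s\in\mathcal{S}$ be such that $|u|=|w|$ and $\mathrm{val}_{\mathcal{F}}(u)=\mathrm{val}_{\mathcal{F}}(ws)$. Then for every $a\in\{0,1,2\}$ there exist a unique $b\in\{0,1\}$ and a unique $t\in\mathcal{S}$ such that $\mathrm{val}_{\mathcal{F}}(ua)=\mathrm{val}_{\mathcal{F}}(wbt)$.
   Context: Fibonacci numbers: $F_0=1$, $F_1=2$, $F_n=F_{n-1}+F_{n-2}$ for $n\ge2$. For a word $w=w_{k-1}\cdots w_0$ over $\{0,1,2\}$ (digits indexed from the right), $\mathrm{val}_{\mathcal{F}}(w)=\sum_{i=0}^{k-1}w_iF_i$. $\mathcal{S}=\{000,001,010,100,101\}$, the set of binary words of length 3 with no two consecutive $1$'s. *)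

theory Defs
  imports Main
begin

fun FF :: "nat \<Rightarrow> nat" where
  "FF 0 = 1"
| "FF (Suc 0) = 2"
| "FF (Suc (Suc n)) = FF (Suc n) + FF n"

text \<open>Words are lists written left to right: the list [w_(k-1), ..., w_0];
  the last list element is the digit of index 0.\<close>
fun valF :: "nat list \<Rightarrow> nat" where
  "valF [] = 0"
| "valF (x # xs) = x * FF (length xs) + valF xs"

definition SS :: "nat list set" where
  "SS = {[0,0,0], [0,0,1], [0,1,0], [1,0,0], [1,0,1]}"

end

theory Submission
  imports Defs Complex_Main
begin

fun Bv :: "nat list \<Rightarrow> nat" where
  "Bv [] = 0"
| "Bv (x # xs) = x * FF (Suc (length xs)) + Bv xs"

lemma snocA: "valF (xs @ [d]) = Bv xs + d"
  by (induction xs) auto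

lemma snocB: "Bv (xs @ [d]) = valF xs + Bv xs + 2 * d"
  by (induction xs) (auto simp: algebra_simps)

lemma val3: "valF (w @ [x,y,z]) = valF w + 2 * Bv w + 3*x + 2*y + z"
proof -
  have "w @ [x,y,z] = ((w @ [x]) @ [y]) @ [z]" by simp
  then have "valF (w @ [x,y,z]) = valF (((w @ [x]) @ [y]) @ [z])" by simp
  also have "\<dots> = valF w + 2 * Bv w + 3*x + 2*y + z" by (simp only: snocA snocB; simp)
  finally show ?thesis .
qed

lemma val4: "valF (w @ [b] @ [x,y,z]) = 2 * valF w + 3 * Bv w + 5*b + 3*x + 2*y + z"
proof -
  have "valF (w @ [b] @ [x,y,z]) = valF ((w @ [b]) @ [x,y,z])" by simp
  also have "\<dots> = valF (w @ [b]) + 2 * Bv (w @ [b]) + 3*x + 2*y + z" by (rule val3)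
  also have "\<dots> = 2 * valF w + 3 * Bv w + 5*b + 3*x + 2*y + z" by (simp only: snocA snocB; simp)
  finally show ?thesis .
qed

lemma SS_len: "t \<in> SS \<Longrightarrow> \<exists>x y z. t = [x,y,z] \<and> valF t = 3*x+2*y+z"
  unfolding SS_def by auto

definition phi :: real where "phi = (1 + sqrt 5) / 2"

lemma phi_sq: "phi * phi = phi + 1"
  unfolding phi_def by (simp add: field_simps)

lemma phi_bounds: "(809/500) < phi \<and> phi < (16181/10000)"
proof -
  have a: "(559/250) < sqrt 5" by (rule real_less_rsqrt) (simp add: power2_eq_square)
  have b: "sqrt 5 < (11181/5000)" by (rule real_less_lsqrt) (simp_all add: power2_eq_square)
  show ?thesis using a b unfolding phi_def by simp
qed

lemma step_bound:
  fixes g d1 d2 :: real and a b :: nat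
  assumes "a \<le> 2" "b \<le> 1" "-(87/100) \<le> d2 - phi * d1" "d2 - phi * d1 \<le> (7/5)"
  shows "-(87/100) \<le> (d1 + d2 + 2*a - 8*b) - phi * (d2 + a - 5*b)
       \<and> (d1 + d2 + 2*a - 8*b) - phi * (d2 + a - 5*b) \<le> (7/5)"
proof -
  define g where "g = d2 - phi * d1"
  have eq: "(d1 + d2 + 2*a - 8*b) - phi * (d2 + a - 5*b) = (1 - phi) * g + (2 - phi) * a + (5*phi - 8) * b"
  proof -
    have "phi * (phi * d1) = (phi + 1) * d1" using phi_sq by (simp add: mult.assoc[symmetric])
    then show ?thesis unfolding g_def by (simp add: algebra_simps)
  qed
  have pb: "(809/500) < phi" "phi < (16181/10000)" using phi_bounds by auto
  have g: "-(87/100) \<le> g" "g \<le> (7/5)" using assms unfolding g_def by auto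
  have ra: "real a \<le> 2" "0 \<le> real a" using assms by auto
  have rb: "real b \<le> 1" "0 \<le> real b" using assms by auto
  have l1: "(1 - phi) * g \<ge> -(87/100)"
  proof (cases "g \<ge> 0")
    case True
    have "(phi - 1) * g \<le> (6181/10000) * (7/5)" using True pb g by (intro mult_mono) auto
    then show ?thesis by (simp add: algebra_simps)
  next
    case False
    have "0 \<le> (1 - phi) * g" using False pb by (intro mult_nonpos_nonpos) auto
    then show ?thesis by linarith
  qed
  have u1: "(1 - phi) * g \<le> (2689/5000)"
  proof (cases "g \<ge> 0")
    case True
    have "(1 - phi) * g \<le> 0" using True pb by (intro mult_nonpos_nonneg) auto
    then show ?thesis by linarith
  next
    case False
    have "(phi - 1) * (-g) \<le> (6181/10000) * (87/100)" using False pb g by (intro mult_mono) auto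
    then show ?thesis by (simp add: algebra_simps)
  qed
  have l2: "(2 - phi) * a \<ge> 0" using pb ra by simp
  have l3: "(5*phi - 8) * b \<ge> 0" using pb rb by simp
  have u2: "(2 - phi) * a \<le> (191/500) * 2" using pb ra by (intro mult_mono) auto
  have u3: "(5*phi - 8) * b \<le> (181/2000) * 1" using pb rb by (intro mult_mono) auto
  show ?thesis unfolding eq using l1 l2 l3 u1 u2 u3 by linarith
qed

lemma invariant:
  "length u = length w \<Longrightarrow> set u \<subseteq> {0,1,2} \<Longrightarrow> set w \<subseteq> {0,1} \<Longrightarrow>
   -(87/100) \<le> (real (Bv u) - 2*valF w - 3*Bv w) - phi * (real (valF u) - valF w - 2*Bv w)
   \<and> (real (Bv u) - 2*valF w - 3*Bv w) - phi * (real (valF u) - valF w - 2*Bv w) \<le> (7/5)"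
proof (induction u w rule: rev_induct2)
  case 1
  then show ?case by simp
next
  case 2 then show ?case by simp
next
  case 3 then show ?case by simp
next
  case (4 a u b w)
  have ab: "a \<le> 2" "b \<le> 1" using "4.prems" by auto
  have ih: "-(87/100) \<le> (real (Bv u) - 2*valF w - 3*Bv w) - phi * (real (valF u) - valF w - 2*Bv w)"
     "(real (Bv u) - 2*valF w - 3*Bv w) - phi * (real (valF u) - valF w - 2*Bv w) \<le> (7/5)"
    using 4 by auto
  from step_bound[OF ab ih]
  show ?case by (simp add: snocA snocB algebra_simps)
qed

definition cod :: "nat \<Rightarrow> nat list" where
  "cod r = (if r = 0 then [0,0,0] else if r = 1 then [0,0,1] else if r = 2 then [0,1,0]
     else if r = 3 then [1,0,0] else [1,0,1])"

lemma choose_ex: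
  assumes "N \<le> 9"
  shows "N div 5 \<in> {0,1::nat} \<and> cod (N mod 5) \<in> SS \<and> N = 5*(N div 5) + valF (cod (N mod 5))"
proof -
  have "N = 0 \<or> N = 1 \<or> N = 2 \<or> N = 3 \<or> N = 4 \<or> N = 5 \<or> N = 6 \<or> N = 7 \<or> N = 8 \<or> N = 9"
    using assms by auto
  then show ?thesis unfolding SS_def cod_def by (elim disjE) simp_all
qed

lemma choose_un:
  assumes "b \<in> {0,1::nat}" "t \<in> SS" "b' \<in> {0,1::nat}" "t' \<in> SS"
    "5*b + valF t = 5*b' + valF t'"
  shows "b = b' \<and> t = t'"
proof -
  have v: "valF t \<le> 4" "valF t' \<le> 4" using assms(2,4) unfolding SS_def by auto
  have bb: "b = b'" using assms(1,3,5) v by auto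
  then have "valF t = valF t'" using assms(5) by simp
  then have "t = t'" using assms(2,4) unfolding SS_def by auto
  then show ?thesis using bb by simp
qed

lemma choose:
  assumes "N \<le> 9"
  shows "\<exists>!(b, t). b \<in> {0,1::nat} \<and> t \<in> SS \<and> N = 5*b + valF t"
proof (rule ex1I[of _ "(N div 5, cod (N mod 5))"])
  show "case (N div 5, cod (N mod 5)) of (b, t) \<Rightarrow> b \<in> {0, 1} \<and> t \<in> SS \<and> N = 5 * b + valF t"
    using choose_ex[OF assms] by simp
next
  fix p assume h: "case p of (b, t) \<Rightarrow> b \<in> {0, 1::nat} \<and> t \<in> SS \<and> N = 5 * b + valF t"
  obtain b t where p: "p = (b, t)" by (cases p)
  have "b = N div 5 \<and> t = cod (N mod 5)"
    using h choose_ex[OF assms] unfolding p by (intro choose_un) auto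
  then show "p = (N div 5, cod (N mod 5))" using p by simp
qed

theorem lemma5p3:
  fixes u w s :: "nat list"
  assumes "set u \<subseteq> {0,1,2}" and "set w \<subseteq> {0,1}" and "s \<in> SS"
    and "length u = length w" and "valF u = valF (w @ s)"
  shows "\<forall>a \<in> {0,1,2::nat}. \<exists>!(b, t). b \<in> {0,1::nat} \<and> t \<in> SS \<and>
           valF (u @ [a]) = valF (w @ [b] @ t)"
proof
  fix a :: nat assume a: "a \<in> {0,1,2}"
  obtain x y z where s: "s = [x,y,z]" "valF s = 3*x+2*y+z" using SS_len[OF assms(3)] by blast
  have vs: "valF s \<le> 4" using assms(3) unfolding SS_def by auto
  have hu: "valF u = valF w + 2 * Bv w + valF s" using assms(5) s by (simp add: val3)
  note inv = invariant[OF assms(4) assms(1) assms(2)]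
  define d2 where "d2 = real (Bv u) - 2*valF w - 3*Bv w"
  have d1: "real (valF u) - valF w - 2*Bv w = real (valF s)" using hu by simp
  have pb: "(809/500) < phi" "phi < (16181/10000)" using phi_bounds by auto
  have i1: "-(87/100) \<le> d2 - phi * valF s" "d2 - phi * valF s \<le> (7/5)"
    using inv d1 unfolding d2_def by auto
  have "phi * valF s \<le> phi * 4" using pb vs by (intro mult_left_mono) auto
  then have up: "d2 < 8" using i1 pb by linarith
  have "phi * valF s \<ge> 0" using pb by simp
  then have lo: "d2 > -1" using i1 by linarith
  have ge: "Bv u \<ge> 2*valF w + 3*Bv w" using lo unfolding d2_def by linarith
  define k where "k = Bv u - (2*valF w + 3*Bv w)"
  have k: "Bv u = 2*valF w + 3*Bv w + k" using ge unfolding k_def by simp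
  have "real k = d2" unfolding d2_def k by simp
  then have k7: "k \<le> 7" using up by linarith
  have N: "k + a \<le> 9" using k7 a by auto
  have eqv: "\<And>b t. t \<in> SS \<Longrightarrow> (valF (u @ [a]) = valF (w @ [b] @ t)) = (k + a = 5*b + valF t)"
  proof -
    fix b t assume "t \<in> SS"
    then obtain x y z where t: "t = [x,y,z]" "valF t = 3*x+2*y+z" using SS_len by blast
    show "(valF (u @ [a]) = valF (w @ [b] @ t)) = (k + a = 5*b + valF t)"
      using t val4[of w b x y z] by (simp add: snocA k; presburger)
  qed
  have "\<exists>!(b, t). b \<in> {0,1::nat} \<and> t \<in> SS \<and> k + a = 5*b + valF t" by (rule choose[OF N])
  moreover have "(\<lambda>(b,t). b \<in> {0,1::nat} \<and> t \<in> SS \<and> valF (u @ [a]) = valF (w @ [b] @ t))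
     = (\<lambda>(b,t). b \<in> {0,1::nat} \<and> t \<in> SS \<and> k + a = 5*b + valF t)"
    using eqv by (auto simp: fun_eq_iff)
  ultimately show "\<exists>!(b, t). b \<in> {0,1::nat} \<and> t \<in> SS \<and> valF (u @ [a]) = valF (w @ [b] @ t)"
    by simp
qed

end
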